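(* Let $(\rho,u,E,F_1,F_2)$ be an optimal quintuple on $[0,T]$ for the full Euler control problem. Assume that for every $a\in[0,T)$ there exists an admissible quintuple $(\tilde\rho,\tilde u,\tilde E,\tilde F_1,\tilde F_2)$ on $[a,T]$ with $(\tilde\rho,\tilde u,\tilde E)(a)=(\rho,u,E)(a)$ and feedback controls $\tilde F_1=-\lambda^{-1/2}(\tilde u-\bar v)$, $\tilde F_2=-\lambda^{-1/2}\big(2\tilde e+\tilde u\cdot(\tilde u-\bar v)\big)$, $\tilde e=\tilde E-\frac12|\tilde u|^2$. Then for every $a\in[0,T]$, $$\int_a^T\int_{\mathbb R^D}\rho|u-\bar v|^2+2\rho e+\lambda G(F_1,F_2)\,dx\,dt\le\sqrt\lambda\int_{\mathbb R^D}\rho(a,x)|u(a,x)-\bar v|^2+2\rho(a,x)e(a,x)\,dx.$$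
   Context: Fix $D\ge1$, $T>0$, $\lambda>0$, $\bar v\in\mathbb R^D$, and an interaction kernel $\Psi:\mathbb R^D\times\mathbb R^D\to\mathbb R$ which is Lipschitz continuous, symmetric ($\Psi(x,y)=\Psi(y,x)$), nonnegative and bounded. For $0\le a<T$, an admissible quintuple on $[a,T]$ for the controlled full Euler system is $(\rho,u,E,F_1,F_2)$ with $\rho\in C^1([a,T]\times\mathbb R^D;[0,\infty))$, $u\in C^1([a,T]\times\mathbb R^D;\mathbb R^D)$, $E\in C^1([a,T]\times\mathbb R^D;\mathbb R)$, $F_1\in C([a,T]\times\mathbb R^D;\mathbb R^D)$, $F_2\in C([a,T]\times\mathbb R^D;\mathbb R)$, such that the internal energy $e:=E-\frac12|u|^2$ satisfies $e>0$ everywhere, there is a compact set $K\subset\mathbb R^D$ with $\operatorname{supp}\rho(t,\cdot)\subset K$ for all $t$, and, with pressure $p:=\frac{2}{D}\rho e$, the system $\partial_t\rho+\nabla_x\cdot(\rho u)=0$, $\partial_t(\rho u)+\nabla_x\cdot(\rho u\otimes u+pI)=Q_1+\rho F_1$, $\partial_t(\rho E)+\nabla_x\cdot(\rho Eu+pu)=Q_2+\rho F_2$ holds classically, where $Q_1(t,x)=\int\Psi(x,y)\rho(t,x)\rho(t,y)\big(u(t,y)-u(t,x)\big)dy$ and $Q_2(t,x)=\int\Psi(x,y)\rho(t,x)\rho(t,y)\big(u(t,x)\cdot u(t,y)-E(t,x)-E(t,y)\big)dy$. Define $G(F_1,F_2)=\rho|F_1|^2+\frac{\rho}{2e}|F_2-u\cdot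 F_1|^2$ and the cost on $[a,T]$, $J^{[a,T]}_{H_2}=\int_a^T\int_{\mathbb R^D}\rho|u-\bar v|^2+2\rho e+\lambda G(F_1,F_2)\,dx\,dt$. An admissible quintuple on $[0,T]$ is optimal if for every $a\in[0,T)$ its restriction to $[a,T]$ minimizes $J^{[a,T]}_{H_2}$ among all admissible quintuples on $[a,T]$ with the same values of $(\rho,u,E)$ at time $a$. *)

theory Defs
  imports "HOL-Analysis.Analysis"
begin

text \<open>Space: real ^ 'n with D = CARD('n). Fields are functions of time t :: real and
  position x :: real ^ 'n.\<close>

definition C1_on :: "(real \<times> (real ^ 'n)) set \<Rightarrow> (real \<times> (real ^ 'n) \<Rightarrow> 'b::real_normed_vector) \<Rightarrow> bool" where
  "C1_on S f \<longleftrightarrow> (\<exists>f'. (\<forall>z\<in>S. (f has_derivative blinfun_apply (f' z)) (at z within S))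
                       \<and> continuous_on S f')"

definition pt :: "real set \<Rightarrow> (real \<Rightarrow> real ^ 'n \<Rightarrow> 'b::real_normed_vector) \<Rightarrow> real \<Rightarrow> real ^ 'n \<Rightarrow> 'b" where
  "pt I f t x = vector_derivative (\<lambda>s. f s x) (at t within I)"

definition px :: "'n \<Rightarrow> (real \<Rightarrow> real ^ 'n \<Rightarrow> 'b::real_normed_vector) \<Rightarrow> real \<Rightarrow> real ^ 'n \<Rightarrow> 'b" where
  "px i f t x = vector_derivative (\<lambda>h. f t (x + h *\<^sub>R axis i 1)) (at 0)"

definition ien :: "(real \<Rightarrow> real ^ 'n \<Rightarrow> real ^ 'n) \<Rightarrow> (real \<Rightarrow> real ^ 'n \<Rightarrow> real) \<Rightarrow> real \<Rightarrow> real ^ 'n \<Rightarrow> real" where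
  "ien u E t x = E t x - (norm (u t x))\<^sup>2 / 2"

definition press :: "(real \<Rightarrow> real ^ 'n \<Rightarrow> real) \<Rightarrow> (real \<Rightarrow> real ^ 'n \<Rightarrow> real ^ 'n) \<Rightarrow> (real \<Rightarrow> real ^ 'n \<Rightarrow> real) \<Rightarrow> real \<Rightarrow> real ^ 'n \<Rightarrow> real" where
  "press \<rho> u E t x = (2 / real CARD('n)) * \<rho> t x * ien u E t x"

definition Q1 :: "(real ^ 'n \<Rightarrow> real ^ 'n \<Rightarrow> real) \<Rightarrow> (real \<Rightarrow> real ^ 'n \<Rightarrow> real) \<Rightarrow> (real \<Rightarrow> real ^ 'n \<Rightarrow> real ^ 'n) \<Rightarrow> real \<Rightarrow> real ^ 'n \<Rightarrow> real ^ 'n" where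
  "Q1 \<Psi> \<rho> u t x = integral UNIV (\<lambda>y. (\<Psi> x y * \<rho> t x * \<rho> t y) *\<^sub>R (u t y - u t x))"

definition Q2 :: "(real ^ 'n \<Rightarrow> real ^ 'n \<Rightarrow> real) \<Rightarrow> (real \<Rightarrow> real ^ 'n \<Rightarrow> real) \<Rightarrow> (real \<Rightarrow> real ^ 'n \<Rightarrow> real ^ 'n) \<Rightarrow> (real \<Rightarrow> real ^ 'n \<Rightarrow> real) \<Rightarrow> real \<Rightarrow> real ^ 'n \<Rightarrow> real" where
  "Q2 \<Psi> \<rho> u E t x = integral UNIV (\<lambda>y. \<Psi> x y * \<rho> t x * \<rho> t y * (inner (u t x) (u t y) - E t x - E t y))"

definition admissible :: "(real ^ 'n \<Rightarrow> real ^ 'n \<Rightarrow> real) \<Rightarrow> real \<Rightarrow> real \<Rightarrow>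
    (real \<Rightarrow> real ^ 'n \<Rightarrow> real) \<Rightarrow> (real \<Rightarrow> real ^ 'n \<Rightarrow> real ^ 'n) \<Rightarrow> (real \<Rightarrow> real ^ 'n \<Rightarrow> real) \<Rightarrow>
    (real \<Rightarrow> real ^ 'n \<Rightarrow> real ^ 'n) \<Rightarrow> (real \<Rightarrow> real ^ 'n \<Rightarrow> real) \<Rightarrow> bool" where
  "admissible \<Psi> a T \<rho> u E F1 F2 \<longleftrightarrow>
     (let S = {a..T} \<times> (UNIV :: (real ^ 'n) set); I = {a..T}; p = press \<rho> u E in
      C1_on S (\<lambda>(t,x). \<rho> t x) \<and> C1_on S (\<lambda>(t,x). u t x) \<and> C1_on S (\<lambda>(t,x). E t x) \<and>
      continuous_on S (\<lambda>(t,x). F1 t x) \<and> continuous_on S (\<lambda>(t,x). F2 t x) \<and>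
      (\<forall>t\<in>I. \<forall>x. \<rho> t x \<ge> 0) \<and>
      (\<forall>t\<in>I. \<forall>x. ien u E t x > 0) \<and>
      (\<exists>K. compact K \<and> (\<forall>t\<in>I. closure {x. \<rho> t x \<noteq> 0} \<subseteq> K)) \<and>
      (\<forall>t\<in>I. \<forall>x.
         pt I \<rho> t x + (\<Sum>i\<in>UNIV. px i (\<lambda>t x. \<rho> t x * u t x $ i) t x) = 0) \<and>
      (\<forall>t\<in>I. \<forall>x.
         pt I (\<lambda>t x. \<rho> t x *\<^sub>R u t x) t x
         + (\<chi> j. \<Sum>i\<in>UNIV. px i (\<lambda>t x. \<rho> t x * u t x $ j * u t x $ i + (if i = j then p t x else 0)) t x)
         = Q1 \<Psi> \<rho> u t x + \<rho> t x *\<^sub>R F1 t x) \<and>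
      (\<forall>t\<in>I. \<forall>x.
         pt I (\<lambda>t x. \<rho> t x * E t x) t x
         + (\<Sum>i\<in>UNIV. px i (\<lambda>t x. \<rho> t x * E t x * u t x $ i + p t x * u t x $ i) t x)
         = Q2 \<Psi> \<rho> u E t x + \<rho> t x * F2 t x))"

definition Gc :: "(real \<Rightarrow> real ^ 'n \<Rightarrow> real) \<Rightarrow> (real \<Rightarrow> real ^ 'n \<Rightarrow> real ^ 'n) \<Rightarrow> (real \<Rightarrow> real ^ 'n \<Rightarrow> real) \<Rightarrow>
    (real \<Rightarrow> real ^ 'n \<Rightarrow> real ^ 'n) \<Rightarrow> (real \<Rightarrow> real ^ 'n \<Rightarrow> real) \<Rightarrow> real \<Rightarrow> real ^ 'n \<Rightarrow> real" where
  "Gc \<rho> u E F1 F2 t x = \<rho> t x * (norm (F1 t x))\<^sup>2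
      + \<rho> t x / (2 * ien u E t x) * \<bar>F2 t x - inner (u t x) (F1 t x)\<bar>\<^sup>2"

definition cost :: "real \<Rightarrow> real ^ 'n \<Rightarrow> real \<Rightarrow> real \<Rightarrow>
    (real \<Rightarrow> real ^ 'n \<Rightarrow> real) \<Rightarrow> (real \<Rightarrow> real ^ 'n \<Rightarrow> real ^ 'n) \<Rightarrow> (real \<Rightarrow> real ^ 'n \<Rightarrow> real) \<Rightarrow>
    (real \<Rightarrow> real ^ 'n \<Rightarrow> real ^ 'n) \<Rightarrow> (real \<Rightarrow> real ^ 'n \<Rightarrow> real) \<Rightarrow> real" where
  "cost lam vbar a T \<rho> u E F1 F2 =
     integral {a..T} (\<lambda>t. integral UNIV (\<lambda>x.
        \<rho> t x * (norm (u t x - vbar))\<^sup>2 + 2 * \<rho> t x * ien u E t x + lam * Gc \<rho> u E F1 F2 t x))"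

definition optimal :: "(real ^ 'n \<Rightarrow> real ^ 'n \<Rightarrow> real) \<Rightarrow> real \<Rightarrow> real ^ 'n \<Rightarrow> real \<Rightarrow>
    (real \<Rightarrow> real ^ 'n \<Rightarrow> real) \<Rightarrow> (real \<Rightarrow> real ^ 'n \<Rightarrow> real ^ 'n) \<Rightarrow> (real \<Rightarrow> real ^ 'n \<Rightarrow> real) \<Rightarrow>
    (real \<Rightarrow> real ^ 'n \<Rightarrow> real ^ 'n) \<Rightarrow> (real \<Rightarrow> real ^ 'n \<Rightarrow> real) \<Rightarrow> bool" where
  "optimal \<Psi> lam vbar T \<rho> u E F1 F2 \<longleftrightarrow>
     admissible \<Psi> 0 T \<rho> u E F1 F2 \<and>
     (\<forall>a\<in>{0..<T}. admissible \<Psi> a T \<rho> u E F1 F2 \<and>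
        (\<forall>\<rho>' u' E' F1' F2'. admissible \<Psi> a T \<rho>' u' E' F1' F2' \<and>
            (\<forall>x. \<rho>' a x = \<rho> a x \<and> u' a x = u a x \<and> E' a x = E a x) \<longrightarrow>
            cost lam vbar a T \<rho> u E F1 F2 \<le> cost lam vbar a T \<rho>' u' E' F1' F2'))"

end

theory Submission
  imports Defs
begin


definition C1w :: "'a::real_normed_vector set \<Rightarrow> ('a \<Rightarrow> 'b::real_normed_vector) \<Rightarrow> ('a \<Rightarrow> 'a \<Rightarrow>\<^sub>L 'b) \<Rightarrow> bool" where
  "C1w S f f' \<longleftrightarrow> (\<forall>z\<in>S. (f has_derivative blinfun_apply (f' z)) (at z within S)) \<and> continuous_on S f'"

lemma C1w_cont: "C1w S f f' \<Longrightarrow> continuous_on S f"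
  unfolding C1w_def
  by (meson continuous_on_eq_continuous_within has_derivative_continuous)

lemma C1w_const: "C1w S (\<lambda>z. c) (\<lambda>z. 0)"
  unfolding C1w_def by (auto intro!: derivative_eq_intros continuous_intros)

lemma C1w_add: "C1w S f f' \<Longrightarrow> C1w S g g' \<Longrightarrow> C1w S (\<lambda>z. f z + g z) (\<lambda>z. f' z + g' z)"
  unfolding C1w_def by (auto intro!: derivative_eq_intros continuous_intros simp: blinfun.bilinear_simps)

lemma C1w_diff: "C1w S f f' \<Longrightarrow> C1w S g g' \<Longrightarrow> C1w S (\<lambda>z. f z - g z) (\<lambda>z. f' z - g' z)"
  unfolding C1w_def by (auto intro!: derivative_eq_intros continuous_intros simp: blinfun.bilinear_simps)

lemma C1w_cscale: "C1w S f f' \<Longrightarrow> C1w S (\<lambda>z. c *\<^sub>R f z) (\<lambda>z. c *\<^sub>R f' z)"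
  unfolding C1w_def by (auto intro!: derivative_eq_intros continuous_intros simp: blinfun.bilinear_simps)

lemma C1w_cmult: "C1w S f f' \<Longrightarrow> C1w S (\<lambda>z. c * (f z::real)) (\<lambda>z. c *\<^sub>R f' z)"
  using C1w_cscale[of S f f' c] by simp

lemma C1w_mult:
  assumes "C1w S f f'" "C1w S g g'"
  shows "C1w S (\<lambda>z. (f z::real) * g z) (\<lambda>z. f z *\<^sub>R g' z + g z *\<^sub>R f' z)"
proof -
  have cf: "continuous_on S f" "continuous_on S g" using assms C1w_cont by auto
  show ?thesis using assms cf unfolding C1w_def
    by (auto intro!: derivative_eq_intros continuous_intros simp: blinfun.bilinear_simps algebra_simps)
qed

lemma C1w_scaleR:
  assumes "C1w S f f'" "C1w S g g'"
  shows "C1w S (\<lambda>z. f z *\<^sub>R g z) (\<lambda>z. f z *\<^sub>R g' z + (blinfun_scaleR_left (g z) o\<^sub>L f' z))"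
proof -
  have cf: "continuous_on S f" "continuous_on S g" using assms C1w_cont by auto
  show ?thesis using assms cf unfolding C1w_def
    by (auto intro!: derivative_eq_intros continuous_intros simp: blinfun.bilinear_simps algebra_simps fun_eq_iff)
qed

lemma C1w_inner:
  fixes f g :: "'a::real_normed_vector \<Rightarrow> 'b::real_inner"
  assumes "C1w S f f'" "C1w S g g'"
  shows "C1w S (\<lambda>z. inner (f z) (g z)) (\<lambda>z. (blinfun_inner_right (f z) o\<^sub>L g' z) + (blinfun_inner_left (g z) o\<^sub>L f' z))"
proof -
  have cf: "continuous_on S f" "continuous_on S g" using assms C1w_cont by auto
  show ?thesis using assms cf unfolding C1w_def
    by (auto intro!: derivative_eq_intros continuous_intros simp: blinfun.bilinear_simps algebra_simps
        blinfun_inner_right.rep_eq blinfun_inner_left.rep_eq fun_eq_iff inner_commute)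
qed

lemma C1w_inner_const:
  fixes f :: "'a::real_normed_vector \<Rightarrow> 'b::real_inner"
  assumes "C1w S f f'"
  shows "C1w S (\<lambda>z. inner (f z) v) (\<lambda>z. blinfun_inner_left v o\<^sub>L f' z)"
  using C1w_inner[OF assms C1w_const[of S v]] by simp


lemma PT_has:
  fixes F :: "real \<times> (real ^ 'n) \<Rightarrow> 'b::euclidean_space"
  assumes C: "C1w ({a..T} \<times> UNIV) F D" and t: "t \<in> {a..T}"
  shows "((\<lambda>s. F (s,x)) has_vector_derivative blinfun_apply (D (t,x)) (1,0)) (at t within {a..T})"
proof -
  have d: "\<And>z. z \<in> {a..T} \<times> UNIV \<Longrightarrow> (F has_derivative blinfun_apply (D z)) (at z within {a..T} \<times> UNIV)"
    using C unfolding C1w_def by auto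
  have "((\<lambda>s. F (s,x)) has_derivative (\<lambda>h. blinfun_apply (D (t,x)) (h,0))) (at t within {a..T})"
    by (rule has_derivative_in_compose2[OF d, of "\<lambda>s. (s,x)" "{a..T}" t "\<lambda>h. (h,0)", simplified])
      (use t in \<open>auto intro!: derivative_eq_intros\<close>)
  moreover have "(\<lambda>h. blinfun_apply (D (t,x)) (h,0)) = (\<lambda>h. h *\<^sub>R blinfun_apply (D (t,x)) (1,0))"
    by (auto simp: fun_eq_iff blinfun.scaleR_right[symmetric])
  ultimately show ?thesis unfolding has_vector_derivative_def by simp
qed
lemma PT_eq:
  fixes F :: "real \<times> (real ^ 'n) \<Rightarrow> 'b::euclidean_space"
  assumes C: "C1w ({a..T} \<times> UNIV) F D" and t: "t \<in> {a..T}" and aT: "a < T"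
    and f: "\<And>t x. f t x = F (t,x)"
  shows "pt {a..T} f t x = blinfun_apply (D (t,x)) (1,0)"
  unfolding pt_def f
  by (rule vector_derivative_within_closed_interval[OF aT t PT_has[OF C t]])
lemma PT_zero:
  fixes F :: "real \<times> (real ^ 'n) \<Rightarrow> 'b::euclidean_space"
  assumes C: "C1w ({a..T} \<times> UNIV) F D" and t: "t \<in> {a..T}" and aT: "a < T"
    and z: "\<And>s. s \<in> {a..T} \<Longrightarrow> F (s,x) = 0"
  shows "blinfun_apply (D (t,x)) (1,0) = 0"
proof -
  have "((\<lambda>s. F (s,x)) has_vector_derivative 0) (at t within {a..T})"
    by (rule has_vector_derivative_transform[OF t, of _ "\<lambda>s. 0"]) (auto simp: z intro!: derivative_eq_intros)
  from vector_derivative_within_closed_interval[OF aT t this]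
    vector_derivative_within_closed_interval[OF aT t PT_has[OF C t]]
  show ?thesis by simp
qed
lemma PX_has:
  fixes F :: "real \<times> (real ^ 'n) \<Rightarrow> 'b::euclidean_space"
  assumes C: "C1w ({a..T} \<times> UNIV) F D" and t: "t \<in> {a..T}"
  shows "((\<lambda>h. F (t, x + h *\<^sub>R e)) has_vector_derivative blinfun_apply (D (t,x)) (0,e)) (at 0)"
proof -
  have d: "\<And>z. z \<in> {a..T} \<times> UNIV \<Longrightarrow> (F has_derivative blinfun_apply (D z)) (at z within {a..T} \<times> UNIV)"
    using C unfolding C1w_def by auto
  have "((\<lambda>h. F (t, x + h *\<^sub>R e)) has_derivative (\<lambda>h. blinfun_apply (D (t,x)) (0, h *\<^sub>R e))) (at 0 within UNIV)"
    by (rule has_derivative_in_compose2[OF d, of "\<lambda>h. (t, x + h *\<^sub>R e)" UNIV 0 "\<lambda>h. (0, h *\<^sub>R e)", simplified])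
      (use t in \<open>auto intro!: derivative_eq_intros\<close>)
  moreover have "(\<lambda>h. blinfun_apply (D (t,x)) (0, h *\<^sub>R e)) = (\<lambda>h. h *\<^sub>R blinfun_apply (D (t,x)) (0,e))"
    by (auto simp: fun_eq_iff blinfun.scaleR_right[symmetric])
  ultimately show ?thesis unfolding has_vector_derivative_def by simp
qed
lemma PX_eq:
  fixes F :: "real \<times> (real ^ 'n) \<Rightarrow> 'b::euclidean_space"
  assumes C: "C1w ({a..T} \<times> UNIV) F D" and t: "t \<in> {a..T}"
    and f: "\<And>t x. f t x = F (t,x)"
  shows "px i f t x = blinfun_apply (D (t,x)) (0, axis i 1)"
  unfolding px_def f
  by (rule vector_derivative_at[OF PX_has[OF C t]])
lemma PX_zero:
  fixes F :: "real \<times> (real ^ 'n) \<Rightarrow> 'b::euclidean_space"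
  assumes C: "C1w ({a..T} \<times> UNIV) F D" and t: "t \<in> {a..T}"
    and K: "closed K" "x \<notin> K" and z: "\<And>y. y \<notin> K \<Longrightarrow> F (t,y) = 0" and e: "norm e = 1"
  shows "blinfun_apply (D (t,x)) (0,e) = 0"
proof -
  obtain r where r: "r > 0" "ball x r \<subseteq> - K"
    using K open_contains_ball[of "- K"] by (auto simp: open_Compl)
  have "((\<lambda>h. F (t, x + h *\<^sub>R e)) has_vector_derivative 0) (at 0)"
  proof (rule has_vector_derivative_transform_within[of "\<lambda>h. 0" 0 0 UNIV r, simplified])
    show "0 < r" by fact
    fix h :: real assume "\<bar>h\<bar> < r"
    then have "x + h *\<^sub>R e \<in> ball x r" using e by (simp add: dist_norm)
    then show "F (t, x + h *\<^sub>R e) = 0" using r z by auto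
  qed
  from vector_derivative_unique_at[OF PX_has[OF C t] this] show ?thesis .
qed
lemma Cint:
  fixes f :: "real ^ 'n \<Rightarrow> 'b::euclidean_space"
  assumes "continuous_on UNIV f" "\<And>x. x \<notin> K \<Longrightarrow> f x = 0" "K \<subseteq> cbox c d"
  shows "(f has_integral integral (cbox c d) f) UNIV"
proof -
  have "f integrable_on cbox c d"
    by (rule integrable_continuous[OF continuous_on_subset[OF assms(1)]]) simp
  then have "(f has_integral integral (cbox c d) f) (cbox c d)" by (rule integrable_integral)
  moreover have "\<And>x. x \<notin> cbox c d \<Longrightarrow> f x = 0" using assms(2,3) by blast
  ultimately show ?thesis by (rule has_integral_on_superset) auto
qed

lemma cont_slice:
  fixes F :: "real \<times> (real ^ 'n) \<Rightarrow> 'b::real_normed_vector"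
  assumes "continuous_on ({a..T} \<times> UNIV) F" "t \<in> {a..T}"
  shows "continuous_on UNIV (\<lambda>x. F (t,x))"
  by (rule continuous_on_compose2[OF assms(1)]) (use assms(2) in \<open>auto intro!: continuous_intros\<close>)
lemma D_cont_slice:
  fixes F :: "real \<times> (real ^ 'n) \<Rightarrow> 'b::real_normed_vector"
  assumes "C1w ({a..T} \<times> UNIV) F D" "t \<in> {a..T}"
  shows "continuous_on UNIV (\<lambda>x. blinfun_apply (D (t,x)) w)"
proof -
  have "continuous_on UNIV (\<lambda>x. D (t,x))" using assms unfolding C1w_def by (intro cont_slice) auto
  then show ?thesis by (auto intro!: continuous_intros)
qed


lemma timederiv:
  fixes F :: "real \<times> (real ^ 'n) \<Rightarrow> real"
  assumes C: "C1w ({a..T} \<times> UNIV) F D" and aT: "a < T" and t: "t \<in> {a..T}"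
    and K: "compact K" and z: "\<And>s x. s \<in> {a..T} \<Longrightarrow> x \<notin> K \<Longrightarrow> F (s,x) = 0"
  shows "((\<lambda>s. integral UNIV (\<lambda>x. F (s,x))) has_vector_derivative integral UNIV (\<lambda>x. blinfun_apply (D (t,x)) (1,0))) (at t within {a..T})"
    and "((\<lambda>x. blinfun_apply (D (t,x)) (1,0)) has_integral integral UNIV (\<lambda>x. blinfun_apply (D (t,x)) (1,0))) UNIV"
proof -
  obtain c where c: "K \<subseteq> cbox (-c) c" using bounded_subset_cbox_symmetric compact_imp_bounded K by metis
  have contF: "continuous_on ({a..T} \<times> UNIV) F" using C1w_cont C .
  have Dc: "continuous_on ({a..T} \<times> UNIV) D" using C unfolding C1w_def by auto
  have eqF: "integral UNIV (\<lambda>x. F (s,x)) = integral (cbox (-c) c) (\<lambda>x. F (s,x))" if s: "s \<in> {a..T}" for s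
    using Cint[OF cont_slice[OF contF s], of K "-c" c] z[OF s] c by (simp add: integral_unique)
  have zD: "\<And>x. x \<notin> K \<Longrightarrow> blinfun_apply (D (t,x)) (1,0) = 0"
    using PT_zero[OF C t aT] z by auto
  have hD: "((\<lambda>x. blinfun_apply (D (t,x)) (1,0)) has_integral integral (cbox (-c) c) (\<lambda>x. blinfun_apply (D (t,x)) (1,0))) UNIV"
    by (rule Cint[OF D_cont_slice[OF C t] zD c])
  have Dc2: "continuous_on ({a..T} \<times> cbox (-c) c) D" by (rule continuous_on_subset[OF Dc]) auto
  have Dc3: "continuous_on ({a..T} \<times> cbox (-c) c) (\<lambda>z. blinfun_apply (D z) (1,0))"
    using Dc2 by (intro continuous_intros)
  have L: "((\<lambda>s. integral (cbox (-c) c) (\<lambda>x. F (s,x))) has_vector_derivative integral (cbox (-c) c) (\<lambda>x. blinfun_apply (D (t,x)) (1,0))) (at t within {a..T})"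
  proof (rule leibniz_rule_vector_derivative[where fx = "\<lambda>s x. blinfun_apply (D (s,x)) (1,0)" and f = "\<lambda>s x. F (s,x)", OF _ _ _ t])
    show "((\<lambda>s. F (s, x)) has_vector_derivative blinfun_apply (D (s, x)) (1, 0)) (at s within {a..T})"
      if "s \<in> {a..T}" for s x using PT_has[OF C that] .
    show "(\<lambda>x. F (s, x)) integrable_on cbox (-c) c" if "s \<in> {a..T}" for s
      by (rule integrable_continuous[OF continuous_on_subset[OF cont_slice[OF contF that]]]) simp
    show "continuous_on ({a..T} \<times> cbox (- c) c) (\<lambda>(s, x). blinfun_apply (D (s, x)) (1, 0))"
      using Dc3 by (simp add: case_prod_beta)
  qed simp
  have L2: "((\<lambda>s. integral UNIV (\<lambda>x. F (s,x))) has_vector_derivative integral (cbox (-c) c) (\<lambda>x. blinfun_apply (D (t,x)) (1,0))) (at t within {a..T})"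
    by (rule has_vector_derivative_transform[OF t _ L]) (simp add: eqF)
  show "((\<lambda>s. integral UNIV (\<lambda>x. F (s,x))) has_vector_derivative integral UNIV (\<lambda>x. blinfun_apply (D (t,x)) (1,0))) (at t within {a..T})"
    using L2 integral_unique[OF hD] by simp
  show "((\<lambda>x. blinfun_apply (D (t,x)) (1,0)) has_integral integral UNIV (\<lambda>x. blinfun_apply (D (t,x)) (1,0))) UNIV"
    using hD integral_unique[OF hD] by simp
qed



lemma PX_has_gen:
  fixes F :: "real \<times> (real ^ 'n) \<Rightarrow> 'b::euclidean_space"
  assumes C: "C1w ({a..T} \<times> UNIV) F D" and t: "t \<in> {a..T}" and h0: "h0 \<in> U"
  shows "((\<lambda>h. F (t, x + h *\<^sub>R e)) has_vector_derivative blinfun_apply (D (t,x + h0 *\<^sub>R e)) (0,e)) (at h0 within U)"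
proof -
  have d: "\<And>z. z \<in> {a..T} \<times> UNIV \<Longrightarrow> (F has_derivative blinfun_apply (D z)) (at z within {a..T} \<times> UNIV)"
    using C unfolding C1w_def by auto
  have "((\<lambda>h. F (t, x + h *\<^sub>R e)) has_derivative (\<lambda>h. blinfun_apply (D (t,x + h0 *\<^sub>R e)) (0, h *\<^sub>R e))) (at h0 within U)"
    by (rule has_derivative_in_compose2[OF d, of "\<lambda>h. (t, x + h *\<^sub>R e)" U h0 "\<lambda>h. (0, h *\<^sub>R e)", simplified])
      (use t h0 in \<open>auto intro!: derivative_eq_intros\<close>)
  moreover have "(\<lambda>h. blinfun_apply (D (t,x + h0 *\<^sub>R e)) (0, h *\<^sub>R e)) = (\<lambda>h. h *\<^sub>R blinfun_apply (D (t,x + h0 *\<^sub>R e)) (0,e))"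
    by (auto simp: fun_eq_iff blinfun.scaleR_right[symmetric])
  ultimately show ?thesis unfolding has_vector_derivative_def by simp
qed

lemma divzero:
  fixes F :: "real \<times> (real ^ 'n) \<Rightarrow> real"
  assumes C: "C1w ({a..T} \<times> UNIV) F D" and t: "t \<in> {a..T}"
    and K: "compact K" and z: "\<And>x. x \<notin> K \<Longrightarrow> F (t,x) = 0"
  shows "((\<lambda>x. blinfun_apply (D (t,x)) (0, axis i 1)) has_integral 0) UNIV"
proof -
  define e :: "real ^ 'n" where "e = axis i 1"
  have ne: "norm e = 1" unfolding e_def by simp
  obtain c where c: "K \<subseteq> cbox (-c) c" using bounded_subset_cbox_symmetric compact_imp_bounded K by metis
  define lo hi where "lo = - c - vec 1" and "hi = c + (vec 1 :: real ^ 'n)"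
  have contF: "continuous_on ({a..T} \<times> UNIV) F" using C1w_cont C .
  have Dc: "continuous_on ({a..T} \<times> UNIV) D" using C unfolding C1w_def by auto
  have cF: "continuous_on UNIV (\<lambda>x. F (t,x))" by (rule cont_slice[OF contF t])
  define J where "J = integral (cbox (-c) c) (\<lambda>x. F (t,x))"
  have hJ: "((\<lambda>x. F (t,x)) has_integral J) UNIV" unfolding J_def by (rule Cint[OF cF z c])
  have shiftbox: "K \<subseteq> cbox (lo + s *\<^sub>R e) (hi + s *\<^sub>R e)" if s: "s \<in> {-1..1}" for s
  proof
    fix y assume "y \<in> K"
    then have y: "\<forall>j. - c $ j \<le> y $ j \<and> y $ j \<le> c $ j" using c by (auto simp: mem_box_cart)
    have a: "\<bar>(s *\<^sub>R e) $ j\<bar> \<le> 1" for j using s by (auto simp: e_def axis_def)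
    show "y \<in> cbox (lo + s *\<^sub>R e) (hi + s *\<^sub>R e)"
      unfolding mem_box_cart
    proof
      fix j
      have "- c $ j \<le> y $ j" "y $ j \<le> c $ j" using y by auto
      then show "(lo + s *\<^sub>R e) $ j \<le> y $ j \<and> y $ j \<le> (hi + s *\<^sub>R e) $ j"
        using a[of j] unfolding lo_def hi_def by (simp add: abs_le_iff)
    qed
  qed
  have intB: "integral (cbox lo hi) (\<lambda>x. F (t, x + s *\<^sub>R e)) = J" if s: "s \<in> {-1..1}" for s
  proof -
    have h1: "((\<lambda>x. F (t,x)) has_integral integral (cbox (lo + s *\<^sub>R e) (hi + s *\<^sub>R e)) (\<lambda>x. F (t,x))) UNIV"
      by (rule Cint[OF cF z shiftbox[OF s]])
    have "integral (cbox (lo + s *\<^sub>R e) (hi + s *\<^sub>R e)) (\<lambda>x. F (t,x)) = J"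
      using has_integral_unique[OF h1 hJ] .
    moreover have "(\<lambda>x. F (t,x)) integrable_on cbox (lo + s *\<^sub>R e) (hi + s *\<^sub>R e)"
      by (rule integrable_continuous[OF continuous_on_subset[OF cF]]) simp
    ultimately have "((\<lambda>x. F (t,x)) has_integral J) (cbox (lo + s *\<^sub>R e) (hi + s *\<^sub>R e))"
      using integrable_integral by metis
    then have "(((\<lambda>x. F (t,x)) \<circ> (+) (s *\<^sub>R e)) has_integral J) (cbox lo hi)"
      using has_integral_shift_cbox_iff[of "\<lambda>x. F (t,x)" "s *\<^sub>R e" J lo hi] by simp
    then show ?thesis by (simp add: o_def add.commute integral_unique)
  qed
  have L: "((\<lambda>s. integral (cbox lo hi) (\<lambda>x. F (t, x + s *\<^sub>R e))) has_vector_derivative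
      integral (cbox lo hi) (\<lambda>x. blinfun_apply (D (t, x + 0 *\<^sub>R e)) (0,e))) (at 0 within {-1..1})"
  proof (rule leibniz_rule_vector_derivative[where fx = "\<lambda>s x. blinfun_apply (D (t, x + s *\<^sub>R e)) (0,e)"
        and f = "\<lambda>s x. F (t, x + s *\<^sub>R e)"])
    show "((\<lambda>s. F (t, x + s *\<^sub>R e)) has_vector_derivative blinfun_apply (D (t, x + s *\<^sub>R e)) (0, e)) (at s within {-1..1})"
      if "s \<in> {-1..1}" for s x using PX_has_gen[OF C t that] .
    show "(\<lambda>x. F (t, x + s *\<^sub>R e)) integrable_on cbox lo hi" for s
      by (rule integrable_continuous) (rule continuous_on_compose2[OF cF], auto intro!: continuous_intros)
    have "continuous_on ({-1..1} \<times> cbox lo hi) (\<lambda>z. D (t, snd z + fst z *\<^sub>R e))"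
      by (rule continuous_on_compose2[OF Dc]) (use t in \<open>auto intro!: continuous_intros\<close>)
    then show "continuous_on ({-1..1} \<times> cbox lo hi) (\<lambda>(s, x). blinfun_apply (D (t, x + s *\<^sub>R e)) (0, e))"
      by (auto simp: case_prod_beta intro!: continuous_intros)
  qed (auto intro: convex_real_interval)
  have L0: "((\<lambda>s. integral (cbox lo hi) (\<lambda>x. F (t, x + s *\<^sub>R e))) has_vector_derivative 0) (at 0 within {-1..1})"
    by (rule has_vector_derivative_transform[of 0 "{-1..1}" _ "\<lambda>s. J"]) (auto simp: intB)
  have i0: "integral (cbox lo hi) (\<lambda>x. blinfun_apply (D (t, x)) (0,e)) = 0"
    using vector_derivative_within_closed_interval[of "-1" 1 0, OF _ _ L]
      vector_derivative_within_closed_interval[of "-1" 1 0, OF _ _ L0] by simp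
  have Kc: "K \<subseteq> cbox lo hi" using shiftbox[of 0] by simp
  have zD: "\<And>x. x \<notin> K \<Longrightarrow> blinfun_apply (D (t,x)) (0,e) = 0"
    using PX_zero[OF C t compact_imp_closed[OF K] _ z ne] by auto
  show ?thesis using Cint[OF D_cont_slice[OF C t] zD Kc] i0 by (simp add: e_def)
qed



lemma sym_int_zero:
  fixes P :: "real ^ 'n \<Rightarrow> real ^ 'n \<Rightarrow> real" and r w :: "real ^ 'n \<Rightarrow> real"
  assumes cP: "continuous_on UNIV (\<lambda>(x,y). P x y)" and cr: "continuous_on UNIV r" and cw: "continuous_on UNIV w"
    and sym: "\<And>x y. P x y = P y x" and K: "compact K" and z: "\<And>x. x \<notin> K \<Longrightarrow> r x = 0"
  shows "integral UNIV (\<lambda>x. integral UNIV (\<lambda>y. P x y * r x * r y * (w y - w x))) = 0"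
proof -
  define f where "f x y = P x y * r x * r y * (w y - w x)" for x y
  obtain c where c: "K \<subseteq> cbox (-c) c" using bounded_subset_cbox_symmetric compact_imp_bounded K by metis
  let ?B = "cbox (-c) c"
  have fz1: "f x y = 0" if "y \<notin> ?B" for x y using that c z unfolding f_def by auto
  have fz2: "f x y = 0" if "x \<notin> ?B" for x y using that c z unfolding f_def by auto
  have inner: "integral UNIV (f x) = integral ?B (f x)" for x
  proof -
    have "f x = (\<lambda>y. if y \<in> ?B then f x y else 0)" using fz1 by auto
    then show ?thesis by (metis (no_types) integral_restrict_UNIV)
  qed
  have outer: "integral UNIV (\<lambda>x. integral ?B (f x)) = integral ?B (\<lambda>x. integral ?B (f x))"
  proof -
    have "(\<lambda>x. integral ?B (f x)) = (\<lambda>x. if x \<in> ?B then integral ?B (f x) else 0)"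
    proof
      fix x
      show "integral ?B (f x) = (if x \<in> ?B then integral ?B (f x) else 0)"
      proof (cases "x \<in> ?B")
        case False
        then have "f x = (\<lambda>y. 0)" using fz2 by auto
        then show ?thesis using False by simp
      qed simp
    qed
    then show ?thesis by (metis (no_types) integral_restrict_UNIV)
  qed
  have cf: "continuous_on (cbox (-c, -c) (c, c)) (\<lambda>(x,y). f x y)"
  proof -
    have "continuous_on UNIV (\<lambda>z. P (fst z) (snd z) * r (fst z) * r (snd z) * (w (snd z) - w (fst z)))"
      using cP by (auto simp: case_prod_beta intro!: continuous_intros continuous_on_compose2[OF cr]
          continuous_on_compose2[OF cw])
    then show ?thesis unfolding f_def by (auto simp: case_prod_beta intro: continuous_on_subset)
  qed
  have swap: "integral ?B (\<lambda>x. integral ?B (f x)) = integral ?B (\<lambda>y. integral ?B (\<lambda>x. f x y))"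
    by (rule integral_swap_continuous[OF cf])
  have anti: "(\<lambda>y. integral ?B (\<lambda>x. f x y)) = (\<lambda>y. - integral ?B (f y))"
  proof
    fix y
    have "(\<lambda>x. f x y) = (\<lambda>x. - f y x)" unfolding f_def using sym by (auto simp: fun_eq_iff algebra_simps)
    then show "integral ?B (\<lambda>x. f x y) = - integral ?B (f y)" by simp
  qed
  have "integral ?B (\<lambda>x. integral ?B (f x)) = - integral ?B (\<lambda>x. integral ?B (f x))"
    using swap anti by simp
  then have "integral ?B (\<lambda>x. integral ?B (f x)) = 0" by simp
  then show ?thesis using inner outer unfolding f_def by simp
qed

lemma ode_ineq:
  fixes H H' :: "real \<Rightarrow> real"
  assumes aT: "a < T" and c: "c > 0"
    and d: "\<And>t. t \<in> {a..T} \<Longrightarrow> (H has_real_derivative H' t) (at t within {a..T})"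
    and le: "\<And>t. t \<in> {a..T} \<Longrightarrow> H' t \<le> - c * H t"
    and nn: "H T \<ge> 0"
  shows "c * integral {a..T} H \<le> H a"
proof -
  have cH: "continuous_on {a..T} H"
    using d by (meson DERIV_continuous continuous_on_eq_continuous_within)
  define Phi where "Phi t = H t + c * integral {a..t} H" for t
  have dP: "(Phi has_derivative (\<lambda>h. h * (H' t + c * H t))) (at t within {a..T})" if "t \<in> {a..T}" for t
  proof -
    have "(Phi has_real_derivative (H' t + c * H t)) (at t within {a..T})"
      unfolding Phi_def using d[OF that] integral_has_real_derivative[OF cH that]
      by (auto intro!: derivative_eq_intros)
    then show ?thesis by (simp add: has_field_derivative_def mult.commute[of _ "H' t + c * H t"])
  qed
  obtain x where x: "x \<in> {a<..<T}" "Phi T - Phi a = (T - a) * (H' x + c * H x)"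
    using mvt_simple[OF aT dP] by auto
  have "H' x + c * H x \<le> 0" using le[of x] x(1) by auto
  then have "Phi T \<le> Phi a" using x aT by (smt (verit) mult_nonneg_nonpos)
  then show ?thesis using nn unfolding Phi_def by simp
qed



lemma flux_int:
  fixes F :: "real \<times> (real ^ 'n) \<Rightarrow> real"
  assumes C: "C1w ({a..T} \<times> UNIV) F D" and f: "\<And>t x. f t x = F (t,x)" and t: "t \<in> {a..T}"
    and K: "compact K" and z: "\<And>x. x \<notin> K \<Longrightarrow> F (t,x) = 0"
  shows "((\<lambda>x. px i f t x) has_integral 0) UNIV"
  using divzero[OF C t K z, of i] PX_eq[OF C t f, of i] by simp

lemma C1_on_C1w: "C1_on S f \<Longrightarrow> \<exists>D. C1w S f D"
  unfolding C1_on_def C1w_def by auto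

lemma flux_exists:
  fixes F :: "real \<times> (real ^ 'n) \<Rightarrow> real"
  assumes "\<exists>D. C1w ({a..T} \<times> UNIV) F D" and f: "\<And>t x. f t x = F (t,x)" and t: "t \<in> {a..T}"
    and K: "compact K" and z: "\<And>x. x \<notin> K \<Longrightarrow> F (t,x) = 0"
  shows "((\<lambda>x. px i f t x) has_integral 0) UNIV"
  using assms flux_int by metis



lemma contint:
  fixes f :: "real ^ 'n \<Rightarrow> 'b::euclidean_space"
  assumes "continuous_on UNIV f" "compact K" "\<And>x. x \<notin> K \<Longrightarrow> f x = 0"
  shows "f integrable_on UNIV"
proof -
  obtain c where c: "K \<subseteq> cbox (-c) c" using bounded_subset_cbox_symmetric compact_imp_bounded assms(2) by metis
  show ?thesis using Cint[OF assms(1) assms(3) c] by blast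
qed

lemma PT_int:
  fixes F :: "real \<times> (real ^ 'n) \<Rightarrow> 'b::euclidean_space"
  assumes C: "C1w ({a..T} \<times> UNIV) F D" and aT: "a < T" and t: "t \<in> {a..T}"
    and K: "compact K" and z: "\<And>s x. s \<in> {a..T} \<Longrightarrow> x \<notin> K \<Longrightarrow> F (s,x) = 0"
  shows "(\<lambda>x. blinfun_apply (D (t,x)) (1,0)) integrable_on UNIV"
  by (rule contint[OF D_cont_slice[OF C t] K]) (use PT_zero[OF C t aT] z in auto)

lemma aux_id: "(p::real) - X - Y = - (a - 2*p + b)/2 - (X - a/2) - (Y - b/2)"
  by (simp add: field_simps)

lemma Q2_nonpos:
  fixes \<Psi> :: "real ^ 'n \<Rightarrow> real ^ 'n \<Rightarrow> real"
  assumes Pnn: "\<And>x y. \<Psi> x y \<ge> 0" and rnn: "\<And>x. \<rho> t x \<ge> 0" and epos: "\<And>x. ien u E t x > 0"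
  shows "Q2 \<Psi> \<rho> u E t x \<le> 0"
proof -
  have pw: "\<Psi> x y * \<rho> t x * \<rho> t y * (inner (u t x) (u t y) - E t x - E t y) \<le> 0" for y
  proof -
    have n: "inner (u t x - u t y) (u t x - u t y) = inner (u t x) (u t x) - 2 * inner (u t x) (u t y) + inner (u t y) (u t y)"
      by (simp add: inner_diff_left inner_diff_right inner_commute)
    have "inner (u t x) (u t y) - E t x - E t y = - (norm (u t x - u t y))\<^sup>2 / 2 - ien u E t x - ien u E t y"
      unfolding ien_def power2_norm_eq_inner n by (rule aux_id)
    also have "\<dots> \<le> 0"
    proof -
      have "0 \<le> (norm (u t x - u t y))\<^sup>2" by simp
      then show ?thesis using epos[of x] epos[of y] by linarith
    qed
    finally have "inner (u t x) (u t y) - E t x - E t y \<le> 0" .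
    moreover have "\<Psi> x y * \<rho> t x * \<rho> t y \<ge> 0" using Pnn rnn by simp
    ultimately show ?thesis by (simp add: mult_nonneg_nonpos)
  qed
  show ?thesis unfolding Q2_def
  proof (cases "(\<lambda>y. \<Psi> x y * \<rho> t x * \<rho> t y * (inner (u t x) (u t y) - E t x - E t y)) integrable_on UNIV")
    case True
    show "integral UNIV (\<lambda>y. \<Psi> x y * \<rho> t x * \<rho> t y * (inner (u t x) (u t y) - E t x - E t y)) \<le> 0"
      using has_integral_le[OF integrable_integral[OF True] has_integral_0] pw by auto
  qed (simp add: not_integrable_integral)
qed


lemma C1w_ex_add: "\<exists>D. C1w S f D \<Longrightarrow> \<exists>D. C1w S g D \<Longrightarrow> \<exists>D. C1w S (\<lambda>z. f z + g z) D"
  using C1w_add by blast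
lemma C1w_ex_mult: "\<exists>D. C1w S f D \<Longrightarrow> \<exists>D. C1w S g D \<Longrightarrow> \<exists>D. C1w S (\<lambda>z. (f z::real) * g z) D"
  using C1w_mult by blast
lemma C1w_ex_if: "\<exists>D. C1w S f D \<Longrightarrow> \<exists>D. C1w S (\<lambda>z. if b then f z else 0) D"
  by (cases b) (use C1w_const[of S 0] in auto)



lemma energy:
  fixes \<Psi> :: "real ^ 'n \<Rightarrow> real ^ 'n \<Rightarrow> real"
    and \<rho> E F2 :: "real \<Rightarrow> real ^ 'n \<Rightarrow> real" and u F1 :: "real \<Rightarrow> real ^ 'n \<Rightarrow> real ^ 'n"
    and v :: "real ^ 'n"
  assumes adm: "admissible \<Psi> a T \<rho> u E F1 F2" and aT: "a < T" and lam: "lam > 0"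
    and cPsi: "continuous_on UNIV (\<lambda>(x,y). \<Psi> x y)" and sym: "\<And>x y. \<Psi> x y = \<Psi> y x"
    and Pnn: "\<And>x y. \<Psi> x y \<ge> 0"
    and fb1: "\<And>t x. t \<in> {a..T} \<Longrightarrow> F1 t x = - (1 / sqrt lam) *\<^sub>R (u t x - v)"
    and fb2: "\<And>t x. t \<in> {a..T} \<Longrightarrow> F2 t x = - (1 / sqrt lam) * (2 * ien u E t x + inner (u t x) (u t x - v))"
  shows "2 * integral {a..T} (\<lambda>t. integral UNIV (\<lambda>x. \<rho> t x * (norm (u t x - v))\<^sup>2 + 2 * \<rho> t x * ien u E t x))
     \<le> sqrt lam * integral UNIV (\<lambda>x. \<rho> a x * (norm (u a x - v))\<^sup>2 + 2 * \<rho> a x * ien u E a x)"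
proof -
  let ?S = "{a..T} \<times> (UNIV :: (real ^ 'n) set)"
  let ?I = "{a..T}"
  define g where "g t x = \<rho> t x * (norm (u t x - v))\<^sup>2 + 2 * \<rho> t x * ien u E t x" for t x
  note A = adm[unfolded admissible_def Let_def]
  note B1 = A[THEN conjunct2] note B2 = B1[THEN conjunct2] note B3 = B2[THEN conjunct2]
  note B4 = B3[THEN conjunct2] note B5 = B4[THEN conjunct2] note B6 = B5[THEN conjunct2]
  note B7 = B6[THEN conjunct2] note B8 = B7[THEN conjunct2] note B9 = B8[THEN conjunct2]
  note B10 = B9[THEN conjunct2]
  obtain DR where DR: "C1w ?S (\<lambda>(t,x). \<rho> t x) DR" using C1_on_C1w[OF A[THEN conjunct1]] by blast
  obtain DU where DU: "C1w ?S (\<lambda>(t,x). u t x) DU" using C1_on_C1w[OF B1[THEN conjunct1]] by blast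
  obtain DE where DE: "C1w ?S (\<lambda>(t,x). E t x) DE" using C1_on_C1w[OF B2[THEN conjunct1]] by blast
  have cF1: "continuous_on ?S (\<lambda>(t,x). F1 t x)" by (rule B3[THEN conjunct1])
  have cF2: "continuous_on ?S (\<lambda>(t,x). F2 t x)" by (rule B4[THEN conjunct1])
  have rnn0: "\<forall>t\<in>?I. \<forall>x. \<rho> t x \<ge> 0" by (rule B5[THEN conjunct1])
  have rnn: "\<And>t x. t \<in> ?I \<Longrightarrow> \<rho> t x \<ge> 0" using rnn0 by simp
  have epos0: "\<forall>t\<in>?I. \<forall>x. ien u E t x > 0" by (rule B6[THEN conjunct1])
  have epos: "\<And>t x. t \<in> ?I \<Longrightarrow> ien u E t x > 0" using epos0 by simp
  obtain K where K: "compact K" and Ksub0: "\<forall>t\<in>?I. closure {x. \<rho> t x \<noteq> 0} \<subseteq> K"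
    using B7[THEN conjunct1] by (elim exE conjE)
  have Ksub: "\<And>t. t \<in> ?I \<Longrightarrow> closure {x. \<rho> t x \<noteq> 0} \<subseteq> K" using Ksub0 by simp
  have zK: "\<rho> t x = 0" if "t \<in> ?I" "x \<notin> K" for t x
  proof (rule ccontr)
    assume "\<rho> t x \<noteq> 0"
    then have "x \<in> closure {x. \<rho> t x \<noteq> 0}" by (intro subsetD[OF closure_subset]) simp
    then have "x \<in> K" using Ksub[OF that(1)] by (rule subsetD[rotated])
    then show False using that(2) by simp
  qed
  have eq10: "\<forall>t\<in>?I. \<forall>x. pt ?I \<rho> t x + (\<Sum>i\<in>UNIV. px i (\<lambda>t x. \<rho> t x * u t x $ i) t x) = 0"
    by (rule B8[THEN conjunct1])
  note eq1 = eq10[rule_format]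
  have eq20: "\<forall>t\<in>?I. \<forall>x. pt ?I (\<lambda>t x. \<rho> t x *\<^sub>R u t x) t x
         + (\<chi> j. \<Sum>i\<in>UNIV. px i (\<lambda>t x. \<rho> t x * u t x $ j * u t x $ i + (if i = j then press \<rho> u E t x else 0)) t x)
         = Q1 \<Psi> \<rho> u t x + \<rho> t x *\<^sub>R F1 t x"
    by (rule B9[THEN conjunct1])
  note eq2 = eq20[rule_format]
  have eq30: "\<forall>t\<in>?I. \<forall>x. pt ?I (\<lambda>t x. \<rho> t x * E t x) t x
         + (\<Sum>i\<in>UNIV. px i (\<lambda>t x. \<rho> t x * E t x * u t x $ i + press \<rho> u E t x * u t x $ i) t x)
         = Q2 \<Psi> \<rho> u E t x + \<rho> t x * F2 t x"
    by (rule B10)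
  note eq3 = eq30[rule_format]
  define Rf where "Rf = (\<lambda>(t,x). \<rho> t x)"
  define Uf where "Uf = (\<lambda>(t,x). u t x)"
  define Ef where "Ef = (\<lambda>(t,x). E t x)"
  note DR = DR[folded Rf_def] and DU = DU[folded Uf_def] and DE = DE[folded Ef_def]
  have Rf: "Rf (t,x) = \<rho> t x" and Uf: "Uf (t,x) = u t x" and Ef: "Ef (t,x) = E t x" for t x
    by (simp_all add: Rf_def Uf_def Ef_def)
  have eR: "\<exists>D. C1w ?S Rf D" using DR by blast
  have eE: "\<exists>D. C1w ?S Ef D" using DE by blast
  have eUc: "\<exists>D. C1w ?S (\<lambda>z. inner (Uf z) (axis j 1)) D" for j using C1w_inner_const[OF DU] by blast
  have ePr: "\<exists>D. C1w ?S (\<lambda>z. (2 / real CARD('n)) * (Rf z * (Ef z - (1/2) * inner (Uf z) (Uf z)))) D"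
  proof -
    obtain D1 where "C1w ?S (\<lambda>z. inner (Uf z) (Uf z)) D1" using C1w_inner[OF DU DU] by blast
    then obtain D2 where "C1w ?S (\<lambda>z. (1/2) * inner (Uf z) (Uf z)) D2" using C1w_cmult by blast
    then obtain D3 where "C1w ?S (\<lambda>z. Ef z - (1/2) * inner (Uf z) (Uf z)) D3" using C1w_diff[OF DE] by blast
    then obtain D4 where "C1w ?S (\<lambda>z. Rf z * (Ef z - (1/2) * inner (Uf z) (Uf z))) D4" using C1w_mult[OF DR] by blast
    then show ?thesis using C1w_cmult by blast
  qed
  have prs: "press \<rho> u E t x = (2 / real CARD('n)) * (Rf (t,x) * (Ef (t,x) - (1/2) * inner (Uf (t,x)) (Uf (t,x))))" for t x
    by (simp add: Rf Uf Ef press_def ien_def power2_norm_eq_inner)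
  have comp: "w $ i = inner w (axis i 1)" for w :: "real ^ 'n" and i by (simp add: inner_axis)
  have hM: "((\<lambda>x. \<Sum>i\<in>UNIV. px i (\<lambda>t x. \<rho> t x * u t x $ i) t x) has_integral 0) UNIV" if t: "t \<in> ?I" for t
  proof -
    have "((\<lambda>x. px i (\<lambda>t x. \<rho> t x * u t x $ i) t x) has_integral 0) UNIV" for i
      by (rule flux_exists[where F = "\<lambda>z. Rf z * inner (Uf z) (axis i 1)", OF C1w_ex_mult[OF eR eUc] _ t K])
         (auto simp: Rf Uf comp zK[OF t])
    then show ?thesis using has_integral_sum[where T=UNIV and f="\<lambda>i x. px i (\<lambda>t x. \<rho> t x * u t x $ i) t x" and i="\<lambda>i. 0" and S=UNIV] by simp
  qed
  have hN: "((\<lambda>x. \<Sum>i\<in>UNIV. px i (\<lambda>t x. \<rho> t x * E t x * u t x $ i + press \<rho> u E t x * u t x $ i) t x) has_integral 0) UNIV" if t: "t \<in> ?I" for t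
  proof -
    have "((\<lambda>x. px i (\<lambda>t x. \<rho> t x * E t x * u t x $ i + press \<rho> u E t x * u t x $ i) t x) has_integral 0) UNIV" for i
      by (rule flux_exists[where F = "\<lambda>z. Rf z * Ef z * inner (Uf z) (axis i 1) + (2 / real CARD('n)) * (Rf z * (Ef z - (1/2) * inner (Uf z) (Uf z))) * inner (Uf z) (axis i 1)",
            OF C1w_ex_add[OF C1w_ex_mult[OF C1w_ex_mult[OF eR eE] eUc] C1w_ex_mult[OF ePr eUc]] _ t K])
         (auto simp: Rf Uf Ef comp zK[OF t] prs)
    then show ?thesis using has_integral_sum[where T=UNIV and f="\<lambda>i x. px i (\<lambda>t x. \<rho> t x * E t x * u t x $ i + press \<rho> u E t x * u t x $ i) t x" and i="\<lambda>i. 0" and S=UNIV] by simp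
  qed
  have hP: "((\<lambda>x. \<Sum>j\<in>UNIV. (\<Sum>i\<in>UNIV. px i (\<lambda>t x. \<rho> t x * u t x $ j * u t x $ i + (if i = j then press \<rho> u E t x else 0)) t x) * v $ j) has_integral 0) UNIV" if t: "t \<in> ?I" for t
  proof -
    have "((\<lambda>x. px i (\<lambda>t x. \<rho> t x * u t x $ j * u t x $ i + (if i = j then press \<rho> u E t x else 0)) t x) has_integral 0) UNIV" for i j
      by (rule flux_exists[where F = "\<lambda>z. Rf z * inner (Uf z) (axis j 1) * inner (Uf z) (axis i 1) + (if i = j then (2 / real CARD('n)) * (Rf z * (Ef z - (1/2) * inner (Uf z) (Uf z))) else 0)",
            OF C1w_ex_add[OF C1w_ex_mult[OF C1w_ex_mult[OF eR eUc] eUc] C1w_ex_if[OF ePr]] _ t K])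
         (auto simp: Rf Uf Ef comp zK[OF t] prs)
    then have "((\<lambda>x. (\<Sum>i\<in>UNIV. px i (\<lambda>t x. \<rho> t x * u t x $ j * u t x $ i + (if i = j then press \<rho> u E t x else 0)) t x) * v $ j) has_integral 0) UNIV" for j
      using has_integral_mult_left[OF has_integral_sum[where T=UNIV and f="\<lambda>i x. px i (\<lambda>t x. \<rho> t x * u t x $ j * u t x $ i + (if i = j then press \<rho> u E t x else 0)) t x" and i="\<lambda>i. 0" and S=UNIV], of "v $ j"] by simp
    then show ?thesis using has_integral_sum[where T=UNIV and f="\<lambda>j x. (\<Sum>i\<in>UNIV. px i (\<lambda>t x. \<rho> t x * u t x $ j * u t x $ i + (if i = j then press \<rho> u E t x else 0)) t x) * v $ j" and i="\<lambda>i. 0" and S=UNIV] by simp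
  qed
  obtain DRE where CRE: "C1w ?S (\<lambda>z. Rf z * Ef z) DRE" using C1w_mult[OF DR DE] by blast
  obtain DRU where CRU: "C1w ?S (\<lambda>z. Rf z *\<^sub>R Uf z) DRU" using C1w_scaleR[OF DR DU] by blast
  define DG where "DG z = 2 *\<^sub>R DRE z - 2 *\<^sub>R (blinfun_inner_left v o\<^sub>L DRU z) + ((norm v)\<^sup>2) *\<^sub>R DR z" for z
  have CG0: "C1w ?S (\<lambda>z. 2 *\<^sub>R (Rf z * Ef z) - 2 *\<^sub>R inner (Rf z *\<^sub>R Uf z) v + ((norm v)\<^sup>2) *\<^sub>R Rf z) DG"
    unfolding DG_def by (intro C1w_add C1w_diff C1w_cscale C1w_inner_const CRE CRU DR)
  have gid: "g t x = 2 *\<^sub>R (Rf (t,x) * Ef (t,x)) - 2 *\<^sub>R inner (Rf (t,x) *\<^sub>R Uf (t,x)) v + ((norm v)\<^sup>2) *\<^sub>R Rf (t,x)" for t x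
  proof -
    have n: "(norm (u t x - v))\<^sup>2 = inner (u t x) (u t x) - 2 * inner (u t x) v + inner v v"
      by (simp add: power2_norm_eq_inner inner_diff_left inner_diff_right inner_commute)
    show ?thesis unfolding g_def ien_def n by (simp add: Rf Uf Ef power2_norm_eq_inner algebra_simps)
  qed
  have Gfun: "(\<lambda>z. g (fst z) (snd z)) = (\<lambda>z. 2 *\<^sub>R (Rf z * Ef z) - 2 *\<^sub>R inner (Rf z *\<^sub>R Uf z) v + ((norm v)\<^sup>2) *\<^sub>R Rf z)"
  proof
    fix z :: "real \<times> (real ^ 'n)"
    obtain t x where "z = (t,x)" by (cases z)
    then show "g (fst z) (snd z) = 2 *\<^sub>R (Rf z * Ef z) - 2 *\<^sub>R inner (Rf z *\<^sub>R Uf z) v + ((norm v)\<^sup>2) *\<^sub>R Rf z"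
      using gid by simp
  qed
  have CG: "C1w ?S (\<lambda>z. g (fst z) (snd z)) DG" unfolding Gfun by (rule CG0)
  have zG: "\<And>s x. s \<in> ?I \<Longrightarrow> x \<notin> K \<Longrightarrow> (\<lambda>z. g (fst z) (snd z)) (s,x) = 0"
    by (simp add: g_def zK)
  define H where "H t = integral UNIV (g t)" for t
  define H' where "H' t = integral UNIV (\<lambda>x. blinfun_apply (DG (t,x)) (1,0))" for t
  have hH: "(H has_real_derivative H' t) (at t within ?I)" if t: "t \<in> ?I" for t
    using timederiv(1)[OF CG aT t K zG] unfolding H_def H'_def
    by (simp add: has_real_derivative_iff_has_vector_derivative)
  have hDG: "((\<lambda>x. blinfun_apply (DG (t,x)) (1,0)) has_integral H' t) UNIV" if t: "t \<in> ?I" for t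
    using timederiv(2)[OF CG aT t K zG] unfolding H'_def .
  have ig: "g t integrable_on UNIV" if t: "t \<in> ?I" for t
  proof -
    have "continuous_on UNIV (\<lambda>x. (\<lambda>z. g (fst z) (snd z)) (t,x))" by (rule cont_slice[OF C1w_cont[OF CG] t])
    then have "continuous_on UNIV (g t)" by simp
    then show ?thesis by (rule contint[OF _ K]) (simp add: g_def zK[OF t])
  qed
  define SM where "SM t x = (\<Sum>i\<in>UNIV. px i (\<lambda>t x. \<rho> t x * u t x $ i) t x)" for t x
  define SN where "SN t x = (\<Sum>i\<in>UNIV. px i (\<lambda>t x. \<rho> t x * E t x * u t x $ i + press \<rho> u E t x * u t x $ i) t x)" for t x
  define SP where "SP t x = (\<Sum>j\<in>UNIV. (\<Sum>i\<in>UNIV. px i (\<lambda>t x. \<rho> t x * u t x $ j * u t x $ i + (if i = j then press \<rho> u E t x else 0)) t x) * v $ j)" for t x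
  have innchi: "inner (\<chi> j. B j) v = (\<Sum>j\<in>UNIV. B j * v $ j)" for B :: "'n \<Rightarrow> real"
    by (simp add: inner_vec_def)
  have DGv: "blinfun_apply (DG (t,x)) (1,0) = 2 * blinfun_apply (DRE (t,x)) (1,0) - 2 * inner (blinfun_apply (DRU (t,x)) (1,0)) v + (norm v)\<^sup>2 * blinfun_apply (DR (t,x)) (1,0)" for t x
    by (simp add: DG_def plus_blinfun.rep_eq minus_blinfun.rep_eq scaleR_blinfun.rep_eq blinfun_inner_left.rep_eq)
  have ptR: "pt ?I \<rho> t x = blinfun_apply (DR (t,x)) (1,0)" if t: "t \<in> ?I" for t x
    by (rule PT_eq[OF DR t aT]) (simp add: Rf)
  have ptRE: "pt ?I (\<lambda>t x. \<rho> t x * E t x) t x = blinfun_apply (DRE (t,x)) (1,0)" if t: "t \<in> ?I" for t x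
    by (rule PT_eq[OF CRE t aT]) (simp add: Rf Ef)
  have ptRU: "pt ?I (\<lambda>t x. \<rho> t x *\<^sub>R u t x) t x = blinfun_apply (DRU (t,x)) (1,0)" if t: "t \<in> ?I" for t x
    by (rule PT_eq[OF CRU t aT]) (simp add: Rf Uf)
  have e1: "blinfun_apply (DR (t,x)) (1,0) = - SM t x" if t: "t \<in> ?I" for t x
    using eq1[OF t, of x] ptR[OF t, of x] unfolding SM_def by simp
  have e3: "blinfun_apply (DRE (t,x)) (1,0) = Q2 \<Psi> \<rho> u E t x + \<rho> t x * F2 t x - SN t x" if t: "t \<in> ?I" for t x
    using eq3[OF t, of x] ptRE[OF t, of x] unfolding SN_def by simp
  have e2: "inner (blinfun_apply (DRU (t,x)) (1,0)) v = inner (Q1 \<Psi> \<rho> u t x) v + \<rho> t x * inner (F1 t x) v - SP t x" if t: "t \<in> ?I" for t x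
  proof -
    have "inner (pt ?I (\<lambda>t x. \<rho> t x *\<^sub>R u t x) t x
         + (\<chi> j. \<Sum>i\<in>UNIV. px i (\<lambda>t x. \<rho> t x * u t x $ j * u t x $ i + (if i = j then press \<rho> u E t x else 0)) t x)) v
         = inner (Q1 \<Psi> \<rho> u t x + \<rho> t x *\<^sub>R F1 t x) v" using eq2[OF t, of x] by simp
    then show ?thesis unfolding inner_add_left innchi SP_def ptRU[OF t] by simp
  qed
  have fbid: "\<rho> t x * F2 t x - \<rho> t x * inner (F1 t x) v = - (1 / sqrt lam) * g t x" if t: "t \<in> ?I" for t x
  proof -
    have n: "(norm (u t x - v))\<^sup>2 = inner (u t x) (u t x - v) - inner v (u t x - v)"
      by (simp add: power2_norm_eq_inner inner_diff_left)
    show ?thesis unfolding fb1[OF t] fb2[OF t] g_def n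
      by (simp add: inner_diff_left inner_commute algebra_simps)
  qed
  have crho: "continuous_on UNIV (\<rho> t)" if t: "t \<in> ?I" for t
    using cont_slice[OF C1w_cont[OF DR] t] by (simp add: Rf)
  have cu: "continuous_on UNIV (u t)" if t: "t \<in> ?I" for t
    using cont_slice[OF C1w_cont[OF DU] t] by (simp add: Uf)
  have cF1s: "continuous_on UNIV (F1 t)" if t: "t \<in> ?I" for t
    using cont_slice[OF cF1 t] by simp
  have cF2s: "continuous_on UNIV (F2 t)" if t: "t \<in> ?I" for t
    using cont_slice[OF cF2 t] by simp
  have cPx: "continuous_on UNIV (\<Psi> x)" for x
    using continuous_on_compose2[OF cPsi, of UNIV "\<lambda>y. (x,y)"] by (simp add: continuous_intros)
  have hF: "((\<lambda>x. \<rho> t x * F2 t x - \<rho> t x * inner (F1 t x) v) has_integral (- (1 / sqrt lam) * H t)) UNIV"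
    if t: "t \<in> ?I" for t
  proof -
    have "((\<lambda>x. - (1 / sqrt lam) * g t x) has_integral (- (1 / sqrt lam) * H t)) UNIV"
      unfolding H_def by (rule has_integral_mult_right[OF integrable_integral[OF ig[OF t]]])
    moreover have "(\<lambda>x. \<rho> t x * F2 t x - \<rho> t x * inner (F1 t x) v) = (\<lambda>x. - (1 / sqrt lam) * g t x)"
      using fbid[OF t] by auto
    ultimately show ?thesis by simp
  qed
  have iRE: "(\<lambda>x. blinfun_apply (DRE (t,x)) (1,0)) integrable_on UNIV" if t: "t \<in> ?I" for t
    by (rule PT_int[OF CRE aT t K]) (simp add: Rf zK)
  have iRU: "(\<lambda>x. inner (blinfun_apply (DRU (t,x)) (1,0)) v) integrable_on UNIV" if t: "t \<in> ?I" for t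
  proof -
    have "(\<lambda>x. blinfun_apply (DRU (t,x)) (1,0)) integrable_on UNIV"
      by (rule PT_int[OF CRU aT t K]) (simp add: Rf zK)
    from integrable_linear[OF this bounded_linear_inner_left[of v]] show ?thesis by (simp add: o_def)
  qed
  have iF2: "(\<lambda>x. \<rho> t x * F2 t x) integrable_on UNIV" if t: "t \<in> ?I" for t
    by (rule contint[OF _ K]) (use crho[OF t] cF2s[OF t] zK[OF t] in \<open>auto intro!: continuous_intros\<close>)
  have iF1: "(\<lambda>x. \<rho> t x * inner (F1 t x) v) integrable_on UNIV" if t: "t \<in> ?I" for t
    by (rule contint[OF _ K]) (use crho[OF t] cF1s[OF t] zK[OF t] in \<open>auto intro!: continuous_intros\<close>)
  have hSM: "(SM t has_integral 0) UNIV" if t: "t \<in> ?I" for t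
    using hM[OF t] unfolding SM_def by simp
  have hSN: "(SN t has_integral 0) UNIV" if t: "t \<in> ?I" for t
    using hN[OF t] unfolding SN_def by simp
  have hSP: "(SP t has_integral 0) UNIV" if t: "t \<in> ?I" for t
    using hP[OF t] unfolding SP_def by simp
  have iQ2: "(\<lambda>x. Q2 \<Psi> \<rho> u E t x) integrable_on UNIV" if t: "t \<in> ?I" for t
  proof -
    have "(\<lambda>x. Q2 \<Psi> \<rho> u E t x) = (\<lambda>x. blinfun_apply (DRE (t,x)) (1,0) - \<rho> t x * F2 t x + SN t x)"
      using e3[OF t] by auto
    moreover have "(\<lambda>x. blinfun_apply (DRE (t,x)) (1,0) - \<rho> t x * F2 t x + SN t x) integrable_on UNIV"
      using iRE[OF t] iF2[OF t] hSN[OF t] by (intro integrable_add integrable_diff) auto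
    ultimately show ?thesis by simp
  qed
  have q2le: "integral UNIV (\<lambda>x. Q2 \<Psi> \<rho> u E t x) \<le> 0" if t: "t \<in> ?I" for t
    using has_integral_le[OF integrable_integral[OF iQ2[OF t]] has_integral_0]
      Q2_nonpos[where \<Psi>=\<Psi> and \<rho>=\<rho> and t=t and u=u and E=E, OF Pnn rnn[OF t] epos[OF t]] by auto
  have iQV: "(\<lambda>x. inner (Q1 \<Psi> \<rho> u t x) v) integrable_on UNIV" if t: "t \<in> ?I" for t
  proof -
    have "(\<lambda>x. inner (Q1 \<Psi> \<rho> u t x) v) = (\<lambda>x. inner (blinfun_apply (DRU (t,x)) (1,0)) v - \<rho> t x * inner (F1 t x) v + SP t x)"
      using e2[OF t] by auto
    moreover have "(\<lambda>x. inner (blinfun_apply (DRU (t,x)) (1,0)) v - \<rho> t x * inner (F1 t x) v + SP t x) integrable_on UNIV"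
      using iRU[OF t] iF1[OF t] hSP[OF t] by (intro integrable_add integrable_diff) auto
    ultimately show ?thesis by simp
  qed
  have QV0: "integral UNIV (\<lambda>x. inner (Q1 \<Psi> \<rho> u t x) v) = 0" if t: "t \<in> ?I" for t
  proof -
    have Q1v: "inner (Q1 \<Psi> \<rho> u t x) v = integral UNIV (\<lambda>y. \<Psi> x y * \<rho> t x * \<rho> t y * (inner (u t y) v - inner (u t x) v))" for x
    proof -
      let ?f = "\<lambda>y. (\<Psi> x y * \<rho> t x * \<rho> t y) *\<^sub>R (u t y - u t x)"
      have "?f integrable_on UNIV"
        by (rule contint[OF _ K]) (use crho[OF t] cu[OF t] cPx[of x] zK[OF t] in \<open>auto intro!: continuous_intros\<close>)
      from integral_linear[OF this bounded_linear_inner_left[of v]]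
      show ?thesis unfolding Q1_def by (simp add: o_def inner_diff_left algebra_simps)
    qed
    have cw: "continuous_on UNIV (\<lambda>y. inner (u t y) v)" using cu[OF t] by (auto intro!: continuous_intros)
    show ?thesis unfolding Q1v by (rule sym_int_zero[OF cPsi crho[OF t] cw sym K zK[OF t]])
  qed
  have le: "H' t \<le> - (2 / sqrt lam) * H t" if t: "t \<in> ?I" for t
  proof -
    let ?q = "integral UNIV (\<lambda>x. Q2 \<Psi> \<rho> u E t x)"
    have hQV: "((\<lambda>x. inner (Q1 \<Psi> \<rho> u t x) v) has_integral 0) UNIV"
      using integrable_integral[OF iQV[OF t]] QV0[OF t] by simp
    have comb: "(\<lambda>x. blinfun_apply (DG (t,x)) (1,0)) = (\<lambda>x. 2 * Q2 \<Psi> \<rho> u E t x - 2 * inner (Q1 \<Psi> \<rho> u t x) v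
        + 2 * (\<rho> t x * F2 t x - \<rho> t x * inner (F1 t x) v) - 2 * SN t x + 2 * SP t x - (norm v)\<^sup>2 * SM t x)"
      by (rule ext) (simp add: DGv e1[OF t] e2[OF t] e3[OF t] algebra_simps)
    have "((\<lambda>x. 2 * Q2 \<Psi> \<rho> u E t x - 2 * inner (Q1 \<Psi> \<rho> u t x) v
        + 2 * (\<rho> t x * F2 t x - \<rho> t x * inner (F1 t x) v) - 2 * SN t x + 2 * SP t x - (norm v)\<^sup>2 * SM t x)
        has_integral (2 * ?q - 2 * 0 + 2 * (- (1 / sqrt lam) * H t) - 2 * 0 + 2 * 0 - (norm v)\<^sup>2 * 0)) UNIV"
      using integrable_integral[OF iQ2[OF t]] hQV hF[OF t] hSN[OF t] hSP[OF t] hSM[OF t]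
      by (intro has_integral_diff has_integral_add has_integral_mult_right)
        (auto simp: has_integral_integral[symmetric])
    then have "H' t = 2 * ?q - 2 * (1 / sqrt lam) * H t"
      using has_integral_unique[OF hDG[OF t]] comb by simp
    then show ?thesis using q2le[OF t] by simp
  qed
  have nn: "H T \<ge> 0"
    unfolding H_def
  proof (rule integral_nonneg[OF ig])
    fix x
    have T: "T \<in> ?I" using aT by simp
    show "0 \<le> g T x" unfolding g_def
      using rnn[OF T, of x] epos[OF T, of x] by (intro add_nonneg_nonneg mult_nonneg_nonneg) auto
  qed (use aT in simp)
  have sl: "sqrt lam > 0" using lam by simp
  have "(2 / sqrt lam) * integral ?I H \<le> H a"
    by (rule ode_ineq[OF aT _ hH le nn]) (use sl in auto)
  then have "2 * integral ?I H \<le> H a * sqrt lam" using sl by (simp add: pos_divide_le_eq)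
  then have "2 * integral ?I H \<le> sqrt lam * H a" by (simp add: mult.commute)
  then show ?thesis unfolding H_def g_def by simp
qed



lemma integral_nonneg_any:
  fixes f :: "real ^ 'n \<Rightarrow> real"
  assumes "\<And>x. 0 \<le> f x"
  shows "0 \<le> integral UNIV f"
proof (cases "f integrable_on UNIV")
  case True then show ?thesis using integral_nonneg assms by blast
qed (simp add: not_integrable_integral)

lemma Gc_feedback:
  assumes lam: "lam > 0" and e: "ien u E t x > 0"
    and f1: "Fa t x = - (1 / sqrt lam) *\<^sub>R (u t x - vbar)"
    and f2: "Fb t x = - (1 / sqrt lam) * (2 * ien u E t x + inner (u t x) (u t x - vbar))"
  shows "\<rho> t x * (norm (u t x - vbar))\<^sup>2 + 2 * \<rho> t x * ien u E t x + lam * Gc \<rho> u E Fa Fb t x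
     = 2 * (\<rho> t x * (norm (u t x - vbar))\<^sup>2 + 2 * \<rho> t x * ien u E t x)"
proof -
  define c where "c = 1 / sqrt lam"
  define w where "w = u t x - vbar"
  define e' where "e' = ien u E t x"
  have c2: "c\<^sup>2 = 1 / lam" unfolding c_def using lam by (simp add: power_divide)
  have n1: "(norm (Fa t x))\<^sup>2 = c\<^sup>2 * (norm w)\<^sup>2"
    unfolding f1 c_def[symmetric] w_def[symmetric] by (simp add: power_mult_distrib)
  have d2: "Fb t x - inner (u t x) (Fa t x) = - c * (2 * e')"
    unfolding f1 f2 c_def[symmetric] w_def[symmetric] e'_def[symmetric] by (simp add: algebra_simps)
  have cc: "c * (c * lam) = 1" using c2 lam by (simp add: power2_eq_square field_simps)
  have "lam * Gc \<rho> u E Fa Fb t x = \<rho> t x * (norm w)\<^sup>2 + 2 * \<rho> t x * e'"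
    unfolding Gc_def d2 n1 e'_def[symmetric] c2 using lam e cc unfolding e'_def[symmetric]
    by (simp add: power2_eq_square field_simps)
  then show ?thesis unfolding w_def e'_def by simp
qed

theorem lemma3p6:
  fixes \<Psi> :: "real ^ 'n \<Rightarrow> real ^ 'n \<Rightarrow> real"
    and T lam :: real and vbar :: "real ^ 'n"
    and \<rho> E F2 :: "real \<Rightarrow> real ^ 'n \<Rightarrow> real"
    and u F1 :: "real \<Rightarrow> real ^ 'n \<Rightarrow> real ^ 'n"
  assumes T_pos: "T > 0" and lam_pos: "lam > 0"
    and Psi_lip: "\<exists>L. lipschitz_on L UNIV (\<lambda>(x, y). \<Psi> x y)"
    and Psi_sym: "\<forall>x y. \<Psi> x y = \<Psi> y x"
    and Psi_nonneg: "\<forall>x y. \<Psi> x y \<ge> 0"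
    and Psi_bdd: "\<exists>B. \<forall>x y. \<Psi> x y \<le> B"
    and opt: "optimal \<Psi> lam vbar T \<rho> u E F1 F2"
    and feedback: "\<forall>a\<in>{0..<T}. \<exists>\<rho>' u' E' F1' F2'.
        admissible \<Psi> a T \<rho>' u' E' F1' F2' \<and>
        (\<forall>x. \<rho>' a x = \<rho> a x \<and> u' a x = u a x \<and> E' a x = E a x) \<and>
        (\<forall>t\<in>{a..T}. \<forall>x. F1' t x = - (1 / sqrt lam) *\<^sub>R (u' t x - vbar)) \<and>
        (\<forall>t\<in>{a..T}. \<forall>x. F2' t x = - (1 / sqrt lam) *
              (2 * ien u' E' t x + inner (u' t x) (u' t x - vbar)))"
  shows "\<forall>a\<in>{0..T}. cost lam vbar a T \<rho> u E F1 F2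
           \<le> sqrt lam * integral UNIV (\<lambda>x. \<rho> a x * (norm (u a x - vbar))\<^sup>2 + 2 * \<rho> a x * ien u E a x)"
proof
  fix a assume a: "a \<in> {0..T}"
  define h where "h a x = \<rho> a x * (norm (u a x - vbar))\<^sup>2 + 2 * \<rho> a x * ien u E a x" for a x
  have adm0: "admissible \<Psi> 0 T \<rho> u E F1 F2" using opt unfolding optimal_def by blast
  obtain L where L: "lipschitz_on L UNIV (\<lambda>(x, y). \<Psi> x y)" using Psi_lip by blast
  have cPsi: "continuous_on UNIV (\<lambda>(x, y). \<Psi> x y)" by (rule lipschitz_on_continuous_on[OF L])
  show "cost lam vbar a T \<rho> u E F1 F2 \<le> sqrt lam * integral UNIV (\<lambda>x. \<rho> a x * (norm (u a x - vbar))\<^sup>2 + 2 * \<rho> a x * ien u E a x)"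
  proof (cases "a = T")
    case True
    have T0: "T \<in> {0..T}" using T_pos by simp
    have rnn: "\<forall>t\<in>{0..T}. \<forall>x. \<rho> t x \<ge> 0" and ep: "\<forall>t\<in>{0..T}. \<forall>x. ien u E t x > 0"
      using adm0 unfolding admissible_def Let_def by blast+
    have "0 \<le> integral UNIV (\<lambda>x. \<rho> T x * (norm (u T x - vbar))\<^sup>2 + 2 * \<rho> T x * ien u E T x)"
    proof (rule integral_nonneg_any)
      fix x
      have "\<rho> T x \<ge> 0" "ien u E T x > 0" using rnn ep T0 by auto
      then show "0 \<le> \<rho> T x * (norm (u T x - vbar))\<^sup>2 + 2 * \<rho> T x * ien u E T x" by simp
    qed
    then show ?thesis using True lam_pos by (simp add: cost_def)
  next
    case False
    then have aT: "a < T" and a': "a \<in> {0..<T}" using a by auto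
    obtain \<rho>' u' E' F1' F2' where adm': "admissible \<Psi> a T \<rho>' u' E' F1' F2'"
      and same: "\<forall>x. \<rho>' a x = \<rho> a x \<and> u' a x = u a x \<and> E' a x = E a x"
      and fb1: "\<forall>t\<in>{a..T}. \<forall>x. F1' t x = - (1 / sqrt lam) *\<^sub>R (u' t x - vbar)"
      and fb2: "\<forall>t\<in>{a..T}. \<forall>x. F2' t x = - (1 / sqrt lam) * (2 * ien u' E' t x + inner (u' t x) (u' t x - vbar))"
      using feedback a' by blast
    have le1: "cost lam vbar a T \<rho> u E F1 F2 \<le> cost lam vbar a T \<rho>' u' E' F1' F2'"
      using opt a' adm' same unfolding optimal_def by blast
    have ep': "\<forall>t\<in>{a..T}. \<forall>x. ien u' E' t x > 0"
      using adm' unfolding admissible_def Let_def by blast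
    have "cost lam vbar a T \<rho>' u' E' F1' F2' = integral {a..T} (\<lambda>t. integral UNIV (\<lambda>x. 2 * (\<rho>' t x * (norm (u' t x - vbar))\<^sup>2 + 2 * \<rho>' t x * ien u' E' t x)))"
      unfolding cost_def
    proof (rule integral_cong)
      fix t assume t: "t \<in> {a..T}"
      show "integral UNIV (\<lambda>x. \<rho>' t x * (norm (u' t x - vbar))\<^sup>2 + 2 * \<rho>' t x * ien u' E' t x + lam * Gc \<rho>' u' E' F1' F2' t x)
          = integral UNIV (\<lambda>x. 2 * (\<rho>' t x * (norm (u' t x - vbar))\<^sup>2 + 2 * \<rho>' t x * ien u' E' t x))"
      proof -
        have eqf: "\<rho>' t x * (norm (u' t x - vbar))\<^sup>2 + 2 * \<rho>' t x * ien u' E' t x + lam * Gc \<rho>' u' E' F1' F2' t x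
          = 2 * (\<rho>' t x * (norm (u' t x - vbar))\<^sup>2 + 2 * \<rho>' t x * ien u' E' t x)" for x
          using ep' fb1 fb2 t
          by (intro Gc_feedback[where u=u' and E=E' and t=t and x=x and Fa=F1' and Fb=F2' and vbar=vbar and \<rho>=\<rho>', OF lam_pos]) auto
        show ?thesis by (simp only: eqf)
      qed
    qed
    also have "\<dots> = 2 * integral {a..T} (\<lambda>t. integral UNIV (\<lambda>x. \<rho>' t x * (norm (u' t x - vbar))\<^sup>2 + 2 * \<rho>' t x * ien u' E' t x))"
      by (simp only: integral_mult_right)
    also have "\<dots> \<le> sqrt lam * integral UNIV (\<lambda>x. \<rho>' a x * (norm (u' a x - vbar))\<^sup>2 + 2 * \<rho>' a x * ien u' E' a x)"
      by (rule energy[OF adm' aT lam_pos cPsi]) (use Psi_sym Psi_nonneg fb1 fb2 in auto)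
    also have "\<dots> = sqrt lam * integral UNIV (\<lambda>x. \<rho> a x * (norm (u a x - vbar))\<^sup>2 + 2 * \<rho> a x * ien u E a x)"
      using same by (simp add: ien_def)
    finally show ?thesis using le1 by simp
  qed
qed


end
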